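(* Let $\Sigma\in\mathbb{R}^{p\times p}$ with $\Sigma\succ0$, $\theta_0\in\mathbb{R}^p$, $S=\mathrm{supp}(\theta_0)$, $\xi>0$, and let $\widehat\theta^\infty$ be the unique minimizer of $\theta\mapsto\frac12\langle\theta-\theta_0,\Sigma(\theta-\theta_0)\rangle+\xi\|\theta\|_1$. Let $T\supseteq S$ and $v\in\{+1,0,-1\}^p$ with $\mathrm{supp}(v)=T$. Then $\mathrm{sign}(\widehat\theta^\infty)=v$ if and only if $$\|\Sigma_{T^c,T}\Sigma_{T,T}^{-1}v_T\|_\infty\le1\quad\text{and}\quad v_T=\mathrm{sign}\big(\theta_{0,T}-\xi\Sigma_{T,T}^{-1}v_T\big).$$ Further, if these hold, $\widehat\theta^\infty_{T^c}=0$ and $\widehat\theta^\infty_T=\theta_{0,T}-\xi\Sigma_{T,T}^{-1}v_T$.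
   Context: $\mathrm{sign}(u)_i=+1,0,-1$ according as $u_i>0,=0,<0$; $A_{I,J}$ submatrix with rows in $I$, columns in $J$; $A_{T,T}^{-1}=(A_{T,T})^{-1}$; $v_T$ restriction to $T$; $T^c=[p]\setminus T$. *)

theory Defs
  imports "HOL-Analysis.Analysis"
begin

text \<open>Indices [p] are modelled by a finite type 'n; vectors in R^p as real^'n,
  p x p matrices as real^'n^'n.\<close>

definition pos_def_mat :: "real^'n^'n \<Rightarrow> bool" where
  "pos_def_mat A \<longleftrightarrow> transpose A = A \<and> (\<forall>x. x \<noteq> 0 \<longrightarrow> x \<bullet> (A *v x) > 0)"

definition supp_vec :: "real^'n \<Rightarrow> 'n set" where
  "supp_vec x = {i. x $ i \<noteq> 0}"

definition sign_vec :: "real^'n \<Rightarrow> real^'n" where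
  "sign_vec x = (\<chi> i. sgn (x $ i))"

text \<open>Inverse of the square submatrix M_{T,T} (indexed by T), extended by 0 outside T x T.\<close>
definition sub_inv :: "real^'n^'n \<Rightarrow> 'n set \<Rightarrow> ('n \<Rightarrow> 'n \<Rightarrow> real)" where
  "sub_inv M T = (THE N. (\<forall>i\<in>T. \<forall>j\<in>T. (\<Sum>k\<in>T. M $ i $ k * N k j) = (if i = j then 1 else 0))
                       \<and> (\<forall>i j. i \<notin> T \<or> j \<notin> T \<longrightarrow> N i j = 0))"

text \<open>(M_{T,T})^{-1} v_T, as a function on T (zero outside T).\<close>
definition sub_inv_apply :: "real^'n^'n \<Rightarrow> 'n set \<Rightarrow> real^'n \<Rightarrow> ('n \<Rightarrow> real)" where
  "sub_inv_apply M T v = (\<lambda>i. \<Sum>j\<in>T. sub_inv M T i j * v $ j)"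

definition lasso_obj :: "real^'n^'n \<Rightarrow> real^'n \<Rightarrow> real \<Rightarrow> real^'n \<Rightarrow> real" where
  "lasso_obj \<Sigma> \<theta>0 \<xi> \<theta> = (1/2) * ((\<theta> - \<theta>0) \<bullet> (\<Sigma> *v (\<theta> - \<theta>0))) + \<xi> * (\<Sum>i\<in>UNIV. \<bar>\<theta> $ i\<bar>)"

end

theory Submission
  imports Defs
begin

lemma symm_inner:
  assumes "transpose S = (S::real^'n^'n)"
  shows "x \<bullet> (S *v y) = y \<bullet> (S *v x)"
proof -
  have "x \<bullet> (S *v y) = (x v* S) \<bullet> y" by (simp add: dot_lmul_matrix)
  also have "x v* S = transpose S *v x" by simp
  also have "\<dots> = S *v x" using assms by simp
  finally show ?thesis by (simp add: inner_commute)
qed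

lemma quad_sum: "x \<bullet> ((S::real^'n^'n) *v x) = (\<Sum>i\<in>UNIV. x$i * (\<Sum>k\<in>UNIV. S$i$k * x$k))"
  by (simp add: inner_vec_def matrix_vector_mult_def)

lemma uniq_T:
  fixes S :: "real^'n^'n" and d :: "'n \<Rightarrow> real"
  assumes pd: "pos_def_mat S" and z: "\<forall>k. k \<notin> T \<longrightarrow> d k = 0"
    and eq: "\<forall>i\<in>T. (\<Sum>k\<in>T. S$i$k * d k) = 0"
  shows "d k = 0"
proof -
  define x :: "real^'n" where "x = (\<chi> k. d k)"
  have full: "(\<Sum>k\<in>UNIV. S$i$k * x$k) = (\<Sum>k\<in>T. S$i$k * d k)" for i
    by (rule sum.mono_neutral_cong_right) (auto simp: x_def z)
  have "x \<bullet> (S *v x) = (\<Sum>i\<in>UNIV. x$i * (\<Sum>k\<in>T. S$i$k * d k))"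
    by (simp add: quad_sum full)
  also have "\<dots> = 0"
  proof (rule sum.neutral, intro ballI)
    fix i :: 'n
    show "x$i * (\<Sum>k\<in>T. S$i$k * d k) = 0"
      by (cases "i \<in> T") (simp_all add: x_def z eq)
  qed
  finally have "x = 0" using pd unfolding pos_def_mat_def by force
  then show ?thesis by (metis x_def vec_lambda_beta zero_index)
qed

lemma sub_inv_prop:
  fixes S :: "real^'n^'n"
  assumes pd: "pos_def_mat S"
  shows "(\<forall>i\<in>T. \<forall>j\<in>T. (\<Sum>k\<in>T. S $ i $ k * sub_inv S T k j) = (if i = j then 1 else 0))
         \<and> (\<forall>i j. i \<notin> T \<or> j \<notin> T \<longrightarrow> sub_inv S T i j = 0)"
proof -
  let ?P = "\<lambda>N. (\<forall>i\<in>T. \<forall>j\<in>T. (\<Sum>k\<in>T. S $ i $ k * N k j) = (if i = j then 1 else (0::real)))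
                       \<and> (\<forall>i j. i \<notin> T \<or> j \<notin> T \<longrightarrow> N i j = 0)"
  define A :: "real^'n^'n" where "A = (\<chi> i j. if i\<in>T \<and> j\<in>T then S$i$j else if i = j then 1 else 0)"
  have AT: "(\<Sum>k\<in>UNIV. A$i$k * y k) = (\<Sum>k\<in>T. S$i$k * y k)" if "i \<in> T" for i y
    by (rule sum.mono_neutral_cong_right) (auto simp: A_def that)
  have ANT: "(\<Sum>k\<in>UNIV. A$i$k * y k) = y i" if "i \<notin> T" for i y
    by (subst sum.remove[of _ i]) (auto simp: A_def that)
  have "inj ((*v) A)"
  proof (rule linear_injective_0[THEN iffD2])
    show "linear ((*v) A)" by (rule matrix_vector_mul_linear)
    show "\<forall>x. A *v x = 0 \<longrightarrow> x = 0"
    proof (intro allI impI)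
      fix x :: "real^'n" assume h: "A *v x = 0"
      have c: "(\<Sum>k\<in>UNIV. A$i$k * x$k) = 0" for i
      proof -
        have "(A *v x)$i = 0" using h by simp
        thus ?thesis by (simp only: matrix_vector_mult_def vec_lambda_beta)
      qed
      have z: "\<forall>k. k \<notin> T \<longrightarrow> x$k = 0"
      proof (intro allI impI)
        fix k assume "k \<notin> T"
        from ANT[OF this, of "\<lambda>k. x$k"] c[of k] show "x$k = 0" by simp
      qed
      have e: "\<forall>i\<in>T. (\<Sum>k\<in>T. S$i$k * x$k) = 0"
      proof
        fix i assume "i \<in> T"
        from AT[OF this, of "\<lambda>k. x$k"] c[of i] show "(\<Sum>k\<in>T. S$i$k * x$k) = 0" by simp
      qed
      show "x = 0" using uniq_T[OF pd z e] by (simp add: vec_eq_iff)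
    qed
  qed
  then obtain B where "B ** A = mat 1" using matrix_left_invertible_injective by blast
  hence AB: "A ** B = mat 1" using matrix_left_right_inverse by blast
  define N where "N = (\<lambda>i j. if i \<in> T \<and> j \<in> T then B$i$j else 0)"
  have PN: "?P N"
  proof
    show "\<forall>i\<in>T. \<forall>j\<in>T. (\<Sum>k\<in>T. S $ i $ k * N k j) = (if i = j then 1 else 0)"
    proof (intro ballI)
      fix i j assume i: "i\<in>T" and j: "j\<in>T"
      have "(\<Sum>k\<in>T. S $ i $ k * N k j) = (\<Sum>k\<in>T. S $ i $ k * B$k$j)"
        by (rule sum.cong) (auto simp: N_def j)
      also have "\<dots> = (\<Sum>k\<in>UNIV. A$i$k * B$k$j)" using AT[OF i, of "\<lambda>k. B$k$j"] by simp
      also have "\<dots> = (A ** B)$i$j" by (simp add: matrix_matrix_mult_def)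
      finally show "(\<Sum>k\<in>T. S $ i $ k * N k j) = (if i = j then 1 else 0)"
        using AB by (simp add: mat_def)
    qed
    show "\<forall>i j. i \<notin> T \<or> j \<notin> T \<longrightarrow> N i j = 0" by (auto simp: N_def)
  qed
  have U: "N1 = N2" if "?P N1" "?P N2" for N1 N2
  proof (intro ext)
    fix k j
    show "N1 k j = N2 k j"
    proof (cases "j \<in> T")
      case False thus ?thesis using that by auto
    next
      case True
      have "(\<lambda>k. N1 k j - N2 k j) k = 0"
      proof (rule uniq_T[OF pd, where T=T and d="\<lambda>k. N1 k j - N2 k j"])
        show "\<forall>k. k \<notin> T \<longrightarrow> N1 k j - N2 k j = 0" using that by auto
        show "\<forall>i\<in>T. (\<Sum>k\<in>T. S $ i $ k * (N1 k j - N2 k j)) = 0"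
          using that True by (simp add: right_diff_distrib sum_subtractf)
      qed
      thus ?thesis by simp
    qed
  qed
  have "?P (THE N. ?P N)"
  proof (rule theI[where a=N])
    show "?P N" by (rule PN)
    fix x assume "?P x"
    thus "x = N" using U PN by blast
  qed
  thus ?thesis by (simp only: sub_inv_def)
qed

lemma expand:
  fixes S :: "real^'n^'n"
  assumes sym: "transpose S = S"
  shows "lasso_obj S t0 xi (x + d) = lasso_obj S t0 xi x + d \<bullet> (S *v (x - t0)) + 1/2 * (d \<bullet> (S *v d))
          + xi * ((\<Sum>i\<in>UNIV. \<bar>(x + d)$i\<bar>) - (\<Sum>i\<in>UNIV. \<bar>x$i\<bar>))"
proof -
  have e: "x + d - t0 = (x - t0) + d" by simp
  have s1: "x \<bullet> (S *v d) = d \<bullet> (S *v x)" by (rule symm_inner[OF sym])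
  have s2: "t0 \<bullet> (S *v d) = d \<bullet> (S *v t0)" by (rule symm_inner[OF sym])
  show ?thesis unfolding lasso_obj_def e
    by (simp add: matrix_vector_right_distrib inner_add_left inner_add_right s1 s2 algebra_simps)
qed

lemma axis_comp: "axis i t $ k = (if k = i then t else 0)"
  by (simp add: axis_def)

lemma l1_axis:
  fixes x :: "real^'n"
  shows "(\<Sum>j\<in>UNIV. \<bar>(x + axis i t)$j\<bar>) = (\<Sum>j\<in>UNIV. \<bar>x$j\<bar>) - \<bar>x$i\<bar> + \<bar>x$i + t\<bar>"
proof -
  have "(\<Sum>j\<in>UNIV. \<bar>(x + axis i t)$j\<bar>) = \<bar>(x + axis i t)$i\<bar> + (\<Sum>j\<in>UNIV-{i}. \<bar>(x + axis i t)$j\<bar>)"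
    by (rule sum.remove) auto
  also have "(\<Sum>j\<in>UNIV-{i}. \<bar>(x + axis i t)$j\<bar>) = (\<Sum>j\<in>UNIV-{i}. \<bar>x$j\<bar>)"
    by (rule sum.cong) (auto simp: axis_comp)
  also have "(\<Sum>j\<in>UNIV. \<bar>x$j\<bar>) = \<bar>x$i\<bar> + (\<Sum>j\<in>UNIV-{i}. \<bar>x$j\<bar>)"
    by (rule sum.remove) auto
  ultimately show ?thesis by (simp add: axis_comp)
qed

lemma quad_axis:
  fixes S :: "real^'n^'n"
  shows "axis i t \<bullet> (S *v axis i t) = t * t * S$i$i"
proof -
  have "(S *v axis i t)$i = S$i$i * t"
    by (simp add: matrix_vector_mult_def axis_comp if_distrib cong: if_cong)
  thus ?thesis by (simp add: inner_axis')
qed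

lemma lim0:
  fixes a b dl :: real
  assumes "dl > 0" and h: "\<forall>s. 0 < s \<and> s < dl \<longrightarrow> 0 \<le> a + b * s"
  shows "0 \<le> a"
proof (rule ccontr)
  assume "\<not> 0 \<le> a" hence a: "a < 0" by simp
  define s where "s = min (dl/2) (- a / (2 * (\<bar>b\<bar> + 1)))"
  have "0 < -a / (2*(\<bar>b\<bar>+1))" using a by (intro divide_pos_pos) auto
  hence sp: "0 < s" using assms(1) by (simp add: s_def)
  have sd: "s < dl" using assms(1) by (simp add: s_def)
  have "s \<le> - a / (2 * (\<bar>b\<bar> + 1))" by (simp add: s_def)
  hence h1: "s * (2 * (\<bar>b\<bar> + 1)) \<le> - a"
    using pos_le_divide_eq[of "2 * (\<bar>b\<bar> + 1)" s "-a"] by (smt (verit) abs_ge_zero)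
  have h2: "b * s \<le> \<bar>b\<bar> * s" using sp by (simp add: mult_right_mono)
  have h3: "s * (2 * (\<bar>b\<bar> + 1)) = 2 * (\<bar>b\<bar> * s) + 2 * s" by (simp add: algebra_simps)
  have "a + b * s < 0" using h1 h2 h3 sp a by linarith
  thus False using h sp sd by force
qed

lemma term_ineq:
  fixes z y e :: real
  assumes "\<bar>z\<bar> \<le> 1" "z * y = \<bar>y\<bar>"
  shows "0 \<le> \<bar>y + e\<bar> - \<bar>y\<bar> - e * z"
proof -
  have "z * (y + e) \<le> \<bar>z\<bar> * \<bar>y + e\<bar>" by (metis abs_ge_self abs_mult)
  also have "\<dots> \<le> \<bar>y + e\<bar>" using assms(1) by (simp add: mult_left_le_one_le)
  finally show ?thesis using assms(2) by (simp add: algebra_simps)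
qed

theorem lemma3p3:
  fixes \<Sigma> :: "real^'n^'n" and \<theta>0 \<theta>hat v :: "real^'n" and \<xi> :: real and T :: "'n set"
  assumes "pos_def_mat \<Sigma>"
    and "\<xi> > 0"
    and "\<forall>\<theta>. lasso_obj \<Sigma> \<theta>0 \<xi> \<theta>hat \<le> lasso_obj \<Sigma> \<theta>0 \<xi> \<theta>"
    and "\<forall>\<theta>. lasso_obj \<Sigma> \<theta>0 \<xi> \<theta> \<le> lasso_obj \<Sigma> \<theta>0 \<xi> \<theta>hat \<longrightarrow> \<theta> = \<theta>hat"
    and "supp_vec \<theta>0 \<subseteq> T"
    and "\<forall>i. v $ i \<in> {-1, 0, 1}"
    and "supp_vec v = T"
  shows "(sign_vec \<theta>hat = v \<longleftrightarrow>
            (\<forall>i\<in>-T. \<bar>\<Sum>j\<in>T. \<Sigma> $ i $ j * sub_inv_apply \<Sigma> T v j\<bar> \<le> 1) \<and>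
            (\<forall>i\<in>T. v $ i = sgn (\<theta>0 $ i - \<xi> * sub_inv_apply \<Sigma> T v i)))
       \<and> ((\<forall>i\<in>-T. \<bar>\<Sum>j\<in>T. \<Sigma> $ i $ j * sub_inv_apply \<Sigma> T v j\<bar> \<le> 1) \<and>
            (\<forall>i\<in>T. v $ i = sgn (\<theta>0 $ i - \<xi> * sub_inv_apply \<Sigma> T v i))
          \<longrightarrow> (\<forall>i\<in>-T. \<theta>hat $ i = 0) \<and>
              (\<forall>i\<in>T. \<theta>hat $ i = \<theta>0 $ i - \<xi> * sub_inv_apply \<Sigma> T v i))"
proof -
  note pd = assms(1)
  have sym: "transpose \<Sigma> = \<Sigma>" using pd by (simp add: pos_def_mat_def)
  define w where "w = sub_inv_apply \<Sigma> T v"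
  define W :: "real^'n" where "W = (\<chi> k. w k)"
  define L where "L = lasso_obj \<Sigma> \<theta>0 \<xi>"
  define ts :: "real^'n" where "ts = \<theta>0 - \<xi> *\<^sub>R W"
  define C1 where "C1 = (\<forall>i\<in>-T. \<bar>\<Sum>j\<in>T. \<Sigma> $ i $ j * w j\<bar> \<le> 1)"
  define C2 where "C2 = (\<forall>i\<in>T. v $ i = sgn (\<theta>0 $ i - \<xi> * w i))"
  have SI: "\<forall>i\<in>T. \<forall>j\<in>T. (\<Sum>k\<in>T. \<Sigma> $ i $ k * sub_inv \<Sigma> T k j) = (if i = j then 1 else 0)"
    "\<forall>i j. i \<notin> T \<or> j \<notin> T \<longrightarrow> sub_inv \<Sigma> T i j = 0"
    using sub_inv_prop[OF pd, of T] by auto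
  have w0: "w k = 0" if "k \<notin> T" for k
    using SI(2) that by (simp add: w_def sub_inv_apply_def)
  have th0: "\<theta>0 $ k = 0" if "k \<notin> T" for k
    using assms(5) that by (auto simp: supp_vec_def)
  have vT: "v $ i \<noteq> 0" if "i \<in> T" for i using assms(7) that by (auto simp: supp_vec_def)
  have vN: "v $ i = 0" if "i \<notin> T" for i using assms(7) that by (auto simp: supp_vec_def)
  have W1: "(\<Sum>k\<in>T. \<Sigma>$i$k * w k) = v$i" if i: "i \<in> T" for i
  proof -
    have "(\<Sum>k\<in>T. \<Sigma>$i$k * w k) = (\<Sum>k\<in>T. \<Sum>j\<in>T. \<Sigma>$i$k * sub_inv \<Sigma> T k j * v$j)"
      by (simp add: w_def sub_inv_apply_def sum_distrib_left mult.assoc)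
    also have "\<dots> = (\<Sum>j\<in>T. \<Sum>k\<in>T. \<Sigma>$i$k * sub_inv \<Sigma> T k j * v$j)" by (rule sum.swap)
    also have "\<dots> = (\<Sum>j\<in>T. (\<Sum>k\<in>T. \<Sigma>$i$k * sub_inv \<Sigma> T k j) * v$j)"
      by (simp add: sum_distrib_right)
    also have "\<dots> = (\<Sum>j\<in>T. (if i = j then v$j else 0))"
      by (rule sum.cong) (use SI(1) i in auto)
    also have "\<dots> = v$i" using i by (simp add: sum.delta)
    finally show ?thesis .
  qed
  have SW: "(\<Sigma> *v W)$i = (\<Sum>k\<in>T. \<Sigma>$i$k * w k)" for i
    unfolding matrix_vector_mult_def W_def
    by simp (rule sum.mono_neutral_cong_right, auto simp: w0)
  have tsc: "ts $ i = \<theta>0 $ i - \<xi> * w i" for i by (simp add: ts_def W_def)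
  have tsN: "ts $ i = 0" if "i \<notin> T" for i using that by (simp add: tsc th0 w0)
  have SUFF: "\<theta>hat = ts" if c1: C1 and c2: C2
  proof -
    have opt: "L ts \<le> L \<theta>" for \<theta>
    proof -
      define d where "d = \<theta> - ts"
      have th: "\<theta> = ts + d" by (simp add: d_def)
      have g: "\<Sigma> *v (ts - \<theta>0) = - \<xi> *\<^sub>R (\<Sigma> *v W)"
      proof -
        have "ts - \<theta>0 = (- \<xi>) *\<^sub>R W" by (simp add: ts_def)
        thus ?thesis by (simp only: matrix_vector_mult_scaleR)
      qed
      have E: "L \<theta> = L ts + d \<bullet> (\<Sigma> *v (ts - \<theta>0)) + 1/2 * (d \<bullet> (\<Sigma> *v d))
          + \<xi> * ((\<Sum>i\<in>UNIV. \<bar>(ts + d)$i\<bar>) - (\<Sum>i\<in>UNIV. \<bar>ts$i\<bar>))"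
        unfolding L_def th by (rule expand[OF sym])
      have q: "0 \<le> d \<bullet> (\<Sigma> *v d)"
      proof (cases "d = 0")
        case True thus ?thesis by simp
      next
        case False thus ?thesis using pd unfolding pos_def_mat_def by (simp add: less_imp_le)
      qed
      have lin: "d \<bullet> (\<Sigma> *v (ts - \<theta>0)) + \<xi> * ((\<Sum>i\<in>UNIV. \<bar>(ts + d)$i\<bar>) - (\<Sum>i\<in>UNIV. \<bar>ts$i\<bar>))
          = \<xi> * (\<Sum>i\<in>UNIV. \<bar>ts$i + d$i\<bar> - \<bar>ts$i\<bar> - d$i * (\<Sigma> *v W)$i)"
      proof -
        have h1: "d \<bullet> (\<Sigma> *v (ts - \<theta>0)) = - \<xi> * (\<Sum>i\<in>UNIV. d$i * (\<Sigma> *v W)$i)"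
          unfolding g by (simp add: inner_vec_def sum_distrib_left sum_negf mult.left_commute)
        have h2: "(\<Sum>i\<in>UNIV. \<bar>(ts + d)$i\<bar>) - (\<Sum>i\<in>UNIV. \<bar>ts$i\<bar>) = (\<Sum>i\<in>UNIV. \<bar>ts$i + d$i\<bar> - \<bar>ts$i\<bar>)"
          by (simp add: sum_subtractf)
        have h3: "(\<Sum>i\<in>UNIV. \<bar>ts$i + d$i\<bar> - \<bar>ts$i\<bar> - d$i * (\<Sigma> *v W)$i)
             = (\<Sum>i\<in>UNIV. \<bar>ts$i + d$i\<bar> - \<bar>ts$i\<bar>) - (\<Sum>i\<in>UNIV. d$i * (\<Sigma> *v W)$i)"
          by (rule sum_subtractf)
        show ?thesis unfolding h1 h2 h3 by (simp add: algebra_simps)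
      qed
      have nn: "0 \<le> (\<Sum>i\<in>UNIV. \<bar>ts$i + d$i\<bar> - \<bar>ts$i\<bar> - d$i * (\<Sigma> *v W)$i)"
      proof (rule sum_nonneg)
        fix i :: 'n
        show "0 \<le> \<bar>ts$i + d$i\<bar> - \<bar>ts$i\<bar> - d$i * (\<Sigma> *v W)$i"
        proof (cases "i \<in> T")
          case True
          have z: "(\<Sigma> *v W)$i = v$i" using W1[OF True] SW by simp
          have sv: "v$i = sgn (ts$i)" using c2 True by (simp add: C2_def tsc)
          show ?thesis
          proof (rule term_ineq)
            show "\<bar>(\<Sigma> *v W)$i\<bar> \<le> 1" using z sv by (simp add: abs_sgn_eq)
            show "(\<Sigma> *v W)$i * ts$i = \<bar>ts$i\<bar>" using z sv by (simp add: sgn_mult_self_eq abs_real_def sgn_real_def)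
          qed
        next
          case False
          show ?thesis
          proof (rule term_ineq)
            show "\<bar>(\<Sigma> *v W)$i\<bar> \<le> 1" using c1 False SW by (simp add: C1_def)
            show "(\<Sigma> *v W)$i * ts$i = \<bar>ts$i\<bar>" using tsN[OF False] by simp
          qed
        qed
      qed
      have "0 \<le> \<xi> * (\<Sum>i\<in>UNIV. \<bar>ts$i + d$i\<bar> - \<bar>ts$i\<bar> - d$i * (\<Sigma> *v W)$i)"
        using assms(2) nn by simp
      thus ?thesis using E lin q by linarith
    qed
    show ?thesis using assms(4) opt[of \<theta>hat] unfolding L_def by metis
  qed
  have NEC: "\<theta>hat = ts \<and> C1" if sg: "sign_vec \<theta>hat = v"
  proof -
    have hs: "sgn (\<theta>hat$i) = v$i" for i using sg by (auto simp: sign_vec_def vec_eq_iff)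
    define g where "g = \<Sigma> *v (\<theta>hat - \<theta>0)"
    have pert: "0 \<le> t * g$i + 1/2 * (t * t * \<Sigma>$i$i) + \<xi> * (\<bar>\<theta>hat$i + t\<bar> - \<bar>\<theta>hat$i\<bar>)" for i t
    proof -
      have "L \<theta>hat \<le> L (\<theta>hat + axis i t)" using assms(3) by (simp add: L_def)
      moreover have "L (\<theta>hat + axis i t) = L \<theta>hat + axis i t \<bullet> g + 1/2 * (axis i t \<bullet> (\<Sigma> *v axis i t))
          + \<xi> * ((\<Sum>j\<in>UNIV. \<bar>(\<theta>hat + axis i t)$j\<bar>) - (\<Sum>j\<in>UNIV. \<bar>\<theta>hat$j\<bar>))"
        unfolding L_def g_def by (rule expand[OF sym])
      ultimately have "0 \<le> axis i t \<bullet> g + 1/2 * (axis i t \<bullet> (\<Sigma> *v axis i t))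
          + \<xi> * ((\<Sum>j\<in>UNIV. \<bar>(\<theta>hat + axis i t)$j\<bar>) - (\<Sum>j\<in>UNIV. \<bar>\<theta>hat$j\<bar>))" by linarith
      thus ?thesis unfolding l1_axis quad_axis by (simp add: inner_axis')
    qed
    have thN: "\<theta>hat$i = 0" if "i \<notin> T" for i using hs[of i] vN[OF that] by (simp add: sgn_0_0)
    have gN: "\<bar>g$i\<bar> \<le> \<xi>" if iN: "i \<notin> T" for i
    proof -
      have a: "0 \<le> (g$i + \<xi>) + (1/2 * \<Sigma>$i$i) * s" if "0 < s" for s
      proof -
        have "0 \<le> s * ((g$i + \<xi>) + (1/2 * \<Sigma>$i$i) * s)"
          using pert[of s i] thN[OF iN] that by (simp add: algebra_simps)
        thus ?thesis using that by (simp add: zero_le_mult_iff)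
      qed
      have b: "0 \<le> (\<xi> - g$i) + (1/2 * \<Sigma>$i$i) * s" if "0 < s" for s
      proof -
        have "0 \<le> s * ((\<xi> - g$i) + (1/2 * \<Sigma>$i$i) * s)"
          using pert[of "-s" i] thN[OF iN] that by (simp add: algebra_simps)
        thus ?thesis using that by (simp add: zero_le_mult_iff)
      qed
      have "0 \<le> g$i + \<xi>" by (rule lim0[where dl=1 and b="1/2 * \<Sigma>$i$i"]) (use a in auto)
      moreover have "0 \<le> \<xi> - g$i" by (rule lim0[where dl=1 and b="1/2 * \<Sigma>$i$i"]) (use b in auto)
      ultimately show ?thesis by linarith
    qed
    have gT: "g$i = - \<xi> * v$i" if iT: "i \<in> T" for i
    proof -
      have nz: "\<theta>hat$i \<noteq> 0" using hs[of i] vT[OF iT] by auto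
      define dl where "dl = \<bar>\<theta>hat$i\<bar>"
      have dl: "0 < dl" using nz by (simp add: dl_def)
      have ab1: "\<bar>\<theta>hat$i + s\<bar> - \<bar>\<theta>hat$i\<bar> = v$i * s" if "0 < s" "s < dl" for s
        using that hs[of i, symmetric] unfolding dl_def by (cases "\<theta>hat$i > 0") (auto simp: sgn_real_def abs_real_def)
      have ab2: "\<bar>\<theta>hat$i + - s\<bar> - \<bar>\<theta>hat$i\<bar> = - (v$i * s)" if "0 < s" "s < dl" for s
        using that hs[of i, symmetric] unfolding dl_def by (cases "\<theta>hat$i > 0") (auto simp: sgn_real_def abs_real_def)
      have a: "0 \<le> (g$i + \<xi> * v$i) + (1/2 * \<Sigma>$i$i) * s" if "0 < s" "s < dl" for s
      proof -
        have "0 \<le> s * ((g$i + \<xi> * v$i) + (1/2 * \<Sigma>$i$i) * s)"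
          using pert[of s i] ab1[OF that] by (simp add: algebra_simps)
        thus ?thesis using that by (simp add: zero_le_mult_iff)
      qed
      have b: "0 \<le> - (g$i + \<xi> * v$i) + (1/2 * \<Sigma>$i$i) * s" if "0 < s" "s < dl" for s
      proof -
        have "0 \<le> s * (- (g$i + \<xi> * v$i) + (1/2 * \<Sigma>$i$i) * s)"
        proof -
          have p: "0 \<le> (-s) * g$i + 1/2 * ((-s) * (-s) * \<Sigma>$i$i) + \<xi> * (- (v$i * s))"
            using pert[of "-s" i] unfolding ab2[OF that] .
          thus ?thesis by (simp add: algebra_simps)
        qed
        thus ?thesis using that by (simp add: zero_le_mult_iff)
      qed
      have "0 \<le> g$i + \<xi> * v$i" by (rule lim0[OF dl, where b="1/2 * \<Sigma>$i$i"]) (use a in auto)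
      moreover have "0 \<le> - (g$i + \<xi> * v$i)" by (rule lim0[OF dl, where b="1/2 * \<Sigma>$i$i"]) (use b in auto)
      ultimately show ?thesis by linarith
    qed
    define u where "u = \<theta>hat - \<theta>0"
    have uN: "u$k = 0" if "k \<notin> T" for k using that by (simp add: u_def thN th0)
    have gs: "g$i = (\<Sum>k\<in>T. \<Sigma>$i$k * u$k)" for i
      unfolding g_def u_def[symmetric] matrix_vector_mult_def
      by simp (rule sum.mono_neutral_cong_right, auto simp: uN)
    have ud: "u$k + \<xi> * w k = 0" for k
    proof (rule uniq_T[OF pd, where T=T and d="\<lambda>k. u$k + \<xi> * w k"])
      show "\<forall>k. k \<notin> T \<longrightarrow> u$k + \<xi> * w k = 0" by (simp add: uN w0)
      show "\<forall>i\<in>T. (\<Sum>k\<in>T. \<Sigma>$i$k * (u$k + \<xi> * w k)) = 0"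
      proof
        fix i assume iT: "i \<in> T"
        have "(\<Sum>k\<in>T. \<Sigma>$i$k * (u$k + \<xi> * w k)) = (\<Sum>k\<in>T. \<Sigma>$i$k * u$k) + \<xi> * (\<Sum>k\<in>T. \<Sigma>$i$k * w k)"
          by (simp add: distrib_left sum.distrib sum_distrib_left algebra_simps)
        also have "\<dots> = 0" using gT[OF iT] gs[of i] W1[OF iT] by simp
        finally show "(\<Sum>k\<in>T. \<Sigma>$i$k * (u$k + \<xi> * w k)) = 0" .
      qed
    qed
    have eq: "\<theta>hat = ts"
    proof (rule iffD2[OF vec_eq_iff], rule allI)
      fix k
      show "\<theta>hat$k = ts$k" using ud[of k] by (simp add: tsc u_def algebra_simps)
    qed
    have "C1"
      unfolding C1_def
    proof
      fix i assume "i \<in> -T"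
      hence iN: "i \<notin> T" by simp
      have "g$i = - \<xi> * (\<Sum>k\<in>T. \<Sigma>$i$k * w k)"
      proof -
        have uk: "u$k = - \<xi> * w k" for k using ud[of k] by linarith
        show ?thesis using gs[of i] by (simp add: uk sum_distrib_left sum_negf mult.left_commute)
      qed
      hence "\<xi> * \<bar>\<Sum>k\<in>T. \<Sigma>$i$k * w k\<bar> \<le> \<xi> * 1" using gN[OF iN] assms(2) by (simp add: abs_mult)
      thus "\<bar>\<Sum>j\<in>T. \<Sigma>$i$j * w j\<bar> \<le> 1" using assms(2) by (simp add: mult_le_cancel_left_pos)
    qed
    with eq show ?thesis by simp
  qed
  have FIN: "(\<forall>i\<in>-T. \<theta>hat $ i = 0) \<and> (\<forall>i\<in>T. \<theta>hat $ i = \<theta>0 $ i - \<xi> * w i)" if "\<theta>hat = ts"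
    using that tsN tsc by auto
  have IFF: "sign_vec \<theta>hat = v \<longleftrightarrow> C1 \<and> C2"
  proof
    assume sg: "sign_vec \<theta>hat = v"
    from NEC[OF sg] have e: "\<theta>hat = ts" and c1: C1 by auto
    have "C2" unfolding C2_def
    proof
      fix i assume "i \<in> T"
      have "v$i = sgn (\<theta>hat$i)" using sg by (auto simp: sign_vec_def)
      thus "v $ i = sgn (\<theta>0 $ i - \<xi> * w i)" using e by (simp add: tsc)
    qed
    with c1 show "C1 \<and> C2" by simp
  next
    assume "C1 \<and> C2"
    hence e: "\<theta>hat = ts" using SUFF by blast
    show "sign_vec \<theta>hat = v"
    proof (rule iffD2[OF vec_eq_iff], rule allI)
      fix i
      show "sign_vec \<theta>hat $ i = v $ i"
      proof (cases "i \<in> T")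
        case True thus ?thesis using \<open>C1 \<and> C2\<close> e by (simp add: C2_def sign_vec_def tsc)
      next
        case False thus ?thesis using e by (simp add: sign_vec_def tsN vN)
      qed
    qed
  qed
  show ?thesis
    using IFF SUFF FIN unfolding C1_def C2_def w_def by blast
qed

end
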